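(* Suppose the underlying undirected graph of $G$ is a tree (so $m=n$ and the reduced incidence matrix $B$ is an invertible $n\times n$ matrix). Fix $s\in\mathbb C^n$. Then (1) $\hat h(\mathbb X(s))=\hat{\mathbb Y}(s)$; and (2) for every $\hat y\in\hat{\mathbb Y}(s)$, the vector $\theta_*:=\mathcal P(B^{-1}\beta(\hat y))$ is the unique vector in $(-\pi,\pi]^n$ such that $h_{\theta_*}(\hat y)\in\mathbb X(s)$.
   Context: $G=(N,E)$ is a directed graph with nodes $N=\{0,1,\dots,n\}$ and $m=|E|$ links; $(i,j)\in E$ denotes a link from $i$ to $j$. Each link has impedance $z_{ij}=r_{ij}+\mathbf{i}x_{ij}$, each node $i$ shunt admittance $y_i=g_i-\mathbf{i}b_i$. The voltage $V_0$ at node 0 is given and taken as angle reference: $V_0=|V_0|$ real and positive; $v_0:=|V_0|^2$. $\mathbb X(s)$ is the set of $x=(S,I,V,s_0)$ with $S,I\in\mathbb C^E$, $V=(V_1,\dots,V_n)$, $s_0\in\mathbb C$ satisfying $V_i-V_j=z_{ij}I_{ij}$, $S_{ij}=V_iI_{ij}^*$ for $(i,j)\in E$, and $\sum_{k:(j,k)\in E}S_{jk}-\sum_{i:(i,j)\in E}(S_{ij}-z_{ij}|I_{ij}|^2)+y_j^*|V_j|^2=s_j$ for $j\in N$. $\hat{\mathbb Y}(s)$ is the set of real $\hat y=(P,Q,\ell,v,p_0,q_0)$ ($P,Q,\ell$ indexed by $E$, $v=(v_1,\dots,v_n)$), with $S_{ij}:=P_{ij}+\mathbf{i}Q_{ij}$,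 $s_j=p_j+\mathbf{i}q_j$, satisfying $p_j=\sum_{k:(j,k)\in E}P_{jk}-\sum_{i:(i,j)\in E}(P_{ij}-r_{ij}\ell_{ij})+g_jv_j$, $q_j=\sum_{k:(j,k)\in E}Q_{jk}-\sum_{i:(i,j)\in E}(Q_{ij}-x_{ij}\ell_{ij})+b_jv_j$ for $j\in N$, and $v_j=v_i-2(r_{ij}P_{ij}+x_{ij}Q_{ij})+(r_{ij}^2+x_{ij}^2)\ell_{ij}$, $\ell_{ij}=(P_{ij}^2+Q_{ij}^2)/v_i$ for $(i,j)\in E$. Projection: $\hat h(S,I,V,s_0)=(\mathrm{Re}\,S,\mathrm{Im}\,S,(|I_{ij}|^2)_{(i,j)\in E},(|V_i|^2)_{i=1}^n,\mathrm{Re}\,s_0,\mathrm{Im}\,s_0)$. Inverse projection for $\theta\in(-\pi,\pi]^n$ (with $\theta_0:=0$): $h_\theta(\hat y)=(S,I,V,s_0)$ with $S_{ij}=P_{ij}+\mathbf{i}Q_{ij}$, $I_{ij}=\sqrt{\ell_{ij}}e^{\mathbf{i}(\theta_i-\angle S_{ij})}$, $V_i=\sqrt{v_i}e^{\mathbf{i}\theta_i}$, $s_0=p_0+\mathbf{i}q_0$. $B$ is the reduced incidence matrix: $B_{ei}=1$ if link $e$ leaves node $i$, $-1$ if it enters $i$, $0$ otherwise ($e\in E$, $i=1,\dots,n$). $\beta(\hat y)\in(-\pi,\pi]^m$ has entries $\beta_{ij}=\angle(v_i-z_{ij}^*S_{ij})$. $\mathcal P$ reduces each component modulo $2\pi$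 into $(-\pi,\pi]$. *)

theory Defs
  imports Complex_Main
begin

type_synonym cstate =
  "(nat \<times> nat \<Rightarrow> complex) \<times> (nat \<times> nat \<Rightarrow> complex) \<times> (nat \<Rightarrow> complex) \<times> complex"
type_synonym rstate =
  "(nat \<times> nat \<Rightarrow> real) \<times> (nat \<times> nat \<Rightarrow> real) \<times> (nat \<times> nat \<Rightarrow> real)
    \<times> (nat \<Rightarrow> real) \<times> real \<times> real"

text \<open>Nodes are 0..n; links are pairs (i,j) in E (a link from i to j).\<close>

definition adj :: "(nat \<times> nat) set \<Rightarrow> nat \<Rightarrow> nat \<Rightarrow> bool" where
  "adj E i j \<longleftrightarrow> (i, j) \<in> E \<or> (j, i) \<in> E"

definition underlying_tree :: "nat \<Rightarrow> (nat \<times> nat) set \<Rightarrow> bool" where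
  "underlying_tree n E \<longleftrightarrow>
     finite E \<and>
     (\<forall>(i, j)\<in>E. i \<noteq> j \<and> (j, i) \<notin> E) \<and>
     (\<forall>i\<in>{0..n}. \<forall>j\<in>{0..n}. (i, j) \<in> (E \<union> E\<inverse>)\<^sup>*) \<and>
     \<not> (\<exists>cs. 3 \<le> length cs \<and> distinct cs \<and>
            (\<forall>k < length cs - 1. adj E (cs ! k) (cs ! Suc k)) \<and> adj E (last cs) (hd cs))"

text \<open>Voltages including the fixed slack node 0.\<close>
definition fullV :: "real \<Rightarrow> (nat \<Rightarrow> complex) \<Rightarrow> nat \<Rightarrow> complex" where
  "fullV V0 V i = (if i = 0 then complex_of_real V0 else V i)"

definition fullv :: "real \<Rightarrow> (nat \<Rightarrow> real) \<Rightarrow> nat \<Rightarrow> real" where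
  "fullv V0 v i = (if i = 0 then V0\<^sup>2 else v i)"

definition Xset :: "nat \<Rightarrow> (nat \<times> nat) set \<Rightarrow> (nat \<times> nat \<Rightarrow> complex) \<Rightarrow> (nat \<Rightarrow> complex)
                    \<Rightarrow> real \<Rightarrow> (nat \<Rightarrow> complex) \<Rightarrow> cstate set" where
  "Xset n E z y V0 s = {(S, I, V, s0).
     (\<forall>e. e \<notin> E \<longrightarrow> S e = 0 \<and> I e = 0) \<and>
     (\<forall>i. i \<notin> {1..n} \<longrightarrow> V i = 0) \<and>
     (\<forall>i\<in>{1..n}. V i \<noteq> 0) \<and>
     (\<forall>(i, j)\<in>E. fullV V0 V i - fullV V0 V j = z (i, j) * I (i, j) \<and>
                 S (i, j) = fullV V0 V i * cnj (I (i, j))) \<and>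
     (\<forall>j\<in>{0..n}.
        (\<Sum>k\<in>{k. (j, k) \<in> E}. S (j, k))
        - (\<Sum>i\<in>{i. (i, j) \<in> E}. S (i, j) - z (i, j) * complex_of_real ((cmod (I (i, j)))\<^sup>2))
        + cnj (y j) * complex_of_real ((cmod (fullV V0 V j))\<^sup>2)
        = (if j = 0 then s0 else s j))}"

text \<open>The set Y-hat(s), with r = Re z, x = Im z, g = Re y, b = - Im y, p + iq = s.\<close>
definition Yhat :: "nat \<Rightarrow> (nat \<times> nat) set \<Rightarrow> (nat \<times> nat \<Rightarrow> complex) \<Rightarrow> (nat \<Rightarrow> complex)
                    \<Rightarrow> real \<Rightarrow> (nat \<Rightarrow> complex) \<Rightarrow> rstate set" where
  "Yhat n E z y V0 s = {(P, Q, l, v, p0, q0).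
     (\<forall>e. e \<notin> E \<longrightarrow> P e = 0 \<and> Q e = 0 \<and> l e = 0) \<and>
     (\<forall>i. i \<notin> {1..n} \<longrightarrow> v i = 0) \<and>
     (\<forall>i\<in>{1..n}. v i > 0) \<and>
     (\<forall>j\<in>{0..n}.
        (if j = 0 then p0 else Re (s j)) =
          (\<Sum>k\<in>{k. (j, k) \<in> E}. P (j, k))
          - (\<Sum>i\<in>{i. (i, j) \<in> E}. P (i, j) - Re (z (i, j)) * l (i, j))
          + Re (y j) * fullv V0 v j \<and>
        (if j = 0 then q0 else Im (s j)) =
          (\<Sum>k\<in>{k. (j, k) \<in> E}. Q (j, k))
          - (\<Sum>i\<in>{i. (i, j) \<in> E}. Q (i, j) - Im (z (i, j)) * l (i, j))
          + (- Im (y j)) * fullv V0 v j) \<and>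
     (\<forall>(i, j)\<in>E.
        fullv V0 v j = fullv V0 v i - 2 * (Re (z (i, j)) * P (i, j) + Im (z (i, j)) * Q (i, j))
                       + ((Re (z (i, j)))\<^sup>2 + (Im (z (i, j)))\<^sup>2) * l (i, j) \<and>
        l (i, j) = ((P (i, j))\<^sup>2 + (Q (i, j))\<^sup>2) / fullv V0 v i)}"

definition hhat :: "cstate \<Rightarrow> rstate" where
  "hhat x = (case x of (S, I, V, s0) \<Rightarrow>
     (\<lambda>e. Re (S e), \<lambda>e. Im (S e), \<lambda>e. (cmod (I e))\<^sup>2, \<lambda>i. (cmod (V i))\<^sup>2, Re s0, Im s0))"

definition Theta :: "nat \<Rightarrow> (nat \<Rightarrow> real) set" where
  "Theta n = {\<theta>. (\<forall>i\<in>{1..n}. - pi < \<theta> i \<and> \<theta> i \<le> pi) \<and> (\<forall>i. i \<notin> {1..n} \<longrightarrow> \<theta> i = 0)}"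

definition h_theta :: "(nat \<Rightarrow> real) \<Rightarrow> rstate \<Rightarrow> cstate" where
  "h_theta \<theta> yh = (case yh of (P, Q, l, v, p0, q0) \<Rightarrow>
     (let th = (\<lambda>i. if i = 0 then 0 else \<theta> i) in
     (\<lambda>e. Complex (P e) (Q e),
      \<lambda>e. complex_of_real (sqrt (l e)) * cis (th (fst e) - Arg (Complex (P e) (Q e))),
      \<lambda>i. complex_of_real (sqrt (v i)) * cis (th i),
      Complex p0 q0)))"

text \<open>Reduced incidence matrix B (rows: links, columns: nodes 1..n).\<close>
definition incB :: "nat \<times> nat \<Rightarrow> nat \<Rightarrow> real" where
  "incB e i = (if fst e = i then 1 else if snd e = i then -1 else 0)"

definition Binv_apply :: "nat \<Rightarrow> (nat \<times> nat) set \<Rightarrow> (nat \<times> nat \<Rightarrow> real) \<Rightarrow> nat \<Rightarrow> real" where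
  "Binv_apply n E w = (THE u. (\<forall>i. i \<notin> {1..n} \<longrightarrow> u i = 0) \<and>
                              (\<forall>e\<in>E. (\<Sum>i=1..n. incB e i * u i) = w e))"

definition beta :: "(nat \<times> nat \<Rightarrow> complex) \<Rightarrow> real \<Rightarrow> rstate \<Rightarrow> nat \<times> nat \<Rightarrow> real" where
  "beta z V0 yh = (case yh of (P, Q, l, v, p0, q0) \<Rightarrow>
     (\<lambda>e. Arg (complex_of_real (fullv V0 v (fst e)) - cnj (z e) * Complex (P e) (Q e))))"

text \<open>Reduction modulo 2 pi into (-pi,pi].\<close>
definition wrap :: "real \<Rightarrow> real" where
  "wrap x = x - 2 * pi * of_int \<lceil>(x - pi) / (2 * pi)\<rceil>"

definition theta_star :: "nat \<Rightarrow> (nat \<times> nat) set \<Rightarrow> (nat \<times> nat \<Rightarrow> complex) \<Rightarrow> real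
                          \<Rightarrow> rstate \<Rightarrow> nat \<Rightarrow> real" where
  "theta_star n E z V0 yh =
     (\<lambda>i. if i \<in> {1..n} then wrap (Binv_apply n E (beta z V0 yh) i) else 0)"

end

theory Submission
  imports Defs
begin


lemma incB_sum:
  assumes "a \<noteq> b" "finite A"
  shows "(\<Sum>i\<in>A. incB (a,b) i * d i) = (if a\<in>A then d a else 0) - (if b\<in>A then d b else 0)"
proof -
  have "\<And>i. incB (a,b) i * d i = (if a = i then d a else 0) - (if b = i then d b else 0)"
    using assms by (auto simp: incB_def)
  then have "(\<Sum>i\<in>A. incB (a,b) i * d i) = (\<Sum>i\<in>A. (if a = i then d a else 0) - (if b = i then d b else 0))"
    by simp
  also have "\<dots> = (if a\<in>A then d a else 0) - (if b\<in>A then d b else 0)"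
    using assms(2) by (simp add: sum_subtractf)
  finally show ?thesis .
qed

lemma edge_sum:
  assumes "a \<noteq> b" "a \<le> n" "b \<le> n" "\<forall>i. i\<notin>{1..n} \<longrightarrow> u i = 0"
  shows "(\<Sum>i=1..n. incB (a,b) i * u i) = u a - u b"
  using assms by (simp add: incB_sum)

lemma propagate:
  assumes "(x,y) \<in> (E \<union> E\<inverse>)\<^sup>*" "\<forall>(a,b)\<in>E. P a \<longleftrightarrow> P b" "P x"
  shows "P y"
  using assms(1,3)
proof (induction rule: rtrancl_induct)
  case base then show ?case by simp
next
  case (step y z) then show ?case using assms(2) by blast
qed

lemma rtrancl_path:
  assumes "(x,y) \<in> R\<^sup>*"
  shows "\<exists>p. distinct p \<and> p \<noteq> [] \<and> hd p = x \<and> last p = y \<and> successively (\<lambda>a b. (a,b)\<in>R) p"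
  using assms
proof (induction rule: converse_rtrancl_induct)
  case base
  then show ?case by (intro exI[of _ "[y]"]) auto
next
  case (step x x')
  then obtain p where p: "distinct p" "p \<noteq> []" "hd p = x'" "last p = y" "successively (\<lambda>a b. (a,b)\<in>R) p"
    by blast
  show ?case
  proof (cases "x \<in> set p")
    case True
    define k where "k = length (takeWhile (\<lambda>z. z \<noteq> x) p)"
    have dw: "dropWhile (\<lambda>z. z \<noteq> x) p = drop k p" by (simp add: k_def dropWhile_eq_drop)
    have ne: "dropWhile (\<lambda>z. z \<noteq> x) p \<noteq> []" using True by simp
    then have kl: "k < length p" using dw by simp
    have split: "p = takeWhile (\<lambda>z. z \<noteq> x) p @ dropWhile (\<lambda>z. z \<noteq> x) p" by simp
    have "successively (\<lambda>a b. (a,b)\<in>R) (dropWhile (\<lambda>z. z \<noteq> x) p)"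
      using p(5) split successively_append_iff by metis
    moreover have "distinct (dropWhile (\<lambda>z. z \<noteq> x) p)" using p(1) split distinct_append by metis
    moreover have "hd (dropWhile (\<lambda>z. z \<noteq> x) p) = x" using hd_dropWhile[OF ne] by simp
    moreover have "last (dropWhile (\<lambda>z. z \<noteq> x) p) = y" using dw kl p(4) by simp
    ultimately show ?thesis using ne by blast
  next
    case False
    then show ?thesis using p step(1)
      by (intro exI[of _ "x # p"]) (auto simp: successively_Cons)
  qed
qed

lemma tree_props:
  assumes "underlying_tree n E"
  shows "finite E" "\<And>i j. (i,j)\<in>E \<Longrightarrow> i \<noteq> j" "\<And>i j. (i,j)\<in>E \<Longrightarrow> (j,i) \<notin> E"
    "\<And>i j. i \<le> n \<Longrightarrow> j \<le> n \<Longrightarrow> (i, j) \<in> (E \<union> E\<inverse>)\<^sup>*"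
    "\<And>cs. 3 \<le> length cs \<Longrightarrow> distinct cs \<Longrightarrow>
            (\<forall>k < length cs - 1. adj E (cs ! k) (cs ! Suc k)) \<Longrightarrow> adj E (last cs) (hd cs) \<Longrightarrow> False"
  using assms unfolding underlying_tree_def by auto

lemma forest_potential:
  assumes T: "underlying_tree n E" and F: "finite F" "F \<subseteq> E"
  shows "\<exists>u. \<forall>(a,b)\<in>F. u a - u b = (w (a,b) :: real)"
  using F
proof (induction F rule: finite_induct)
  case empty then show ?case by simp
next
  case (insert e F)
  obtain a b where e: "e = (a,b)" by force
  from insert obtain u where u: "\<forall>(a,b)\<in>F. u a - u b = w (a,b)" by auto
  have abE: "(a,b) \<in> E" using insert.prems e by simp
  have FE: "F \<subseteq> E" using insert.prems by simp
  define C where "C = {x. (b,x) \<in> (F \<union> F\<inverse>)\<^sup>*}"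
  have aC: "a \<notin> C"
  proof
    assume "a \<in> C"
    then have ba: "(b,a) \<in> (F \<union> F\<inverse>)\<^sup>*" by (simp add: C_def)
    obtain p where p: "distinct p" "p \<noteq> []" "hd p = b" "last p = a"
       "successively (\<lambda>x y. (x,y)\<in>F \<union> F\<inverse>) p"
      using rtrancl_path[OF ba] by blast
    have ab: "a \<noteq> b" using tree_props(2)[OF T abE] .
    have adjs: "\<forall>k < length p - 1. adj E (p ! k) (p ! Suc k)"
    proof (intro allI impI)
      fix k assume "k < length p - 1"
      then have "(p!k, p!Suc k) \<in> F \<union> F\<inverse>" using successively_nth[OF p(5)] by simp
      then show "adj E (p ! k) (p ! Suc k)" using FE by (auto simp: adj_def)
    qed
    have "length p \<noteq> 1" using p ab by (cases p) auto
    moreover have "length p \<noteq> 2"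
    proof
      assume l2: "length p = 2"
      then obtain c d where pcd: "p = [c,d]"
        by (metis One_nat_def Suc_1 length_0_conv length_Suc_conv)
      then have "c = b" "d = a" using p by auto
      then have "(b,a) \<in> F \<union> F\<inverse>" using p(5) pcd by simp
      then show False using insert(2) e tree_props(3)[OF T abE] FE by auto
    qed
    moreover have "length p \<noteq> 0" using p(2) by simp
    ultimately have "3 \<le> length p" by linarith
    moreover have "adj E (last p) (hd p)" using p abE by (simp add: adj_def)
    ultimately show False using tree_props(5)[OF T _ p(1) adjs] by blast
  qed
  have bC: "b \<in> C" by (simp add: C_def)
  define c where "c = u a - u b - w (a,b)"
  define u' where "u' = (\<lambda>x. u x + (if x \<in> C then c else 0))"
  have inv: "x \<in> C \<longleftrightarrow> x' \<in> C" if "(x,x') \<in> F" for x x'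
  proof
    assume "x \<in> C" then show "x' \<in> C" using that unfolding C_def
      by (auto intro: rtrancl_into_rtrancl)
  next
    assume "x' \<in> C" then show "x \<in> C" using that unfolding C_def
      by (auto intro: rtrancl_into_rtrancl)
  qed
  have "\<forall>(x,x')\<in>insert e F. u' x - u' x' = w (x,x')"
  proof (intro ballI, clarify)
    fix x x' assume "(x,x') \<in> insert e F"
    then show "u' x - u' x' = w (x,x')"
    proof
      assume "(x,x') = e" then show ?thesis using e aC bC by (simp add: u'_def c_def)
    next
      assume h: "(x,x') \<in> F"
      then show ?thesis using u inv[OF h] by (auto simp: u'_def)
    qed
  qed
  then show ?case by blast
qed

lemma Binv_spec:
  assumes T: "underlying_tree n E" and Esub: "E \<subseteq> {0..n} \<times> {0..n}"
  shows "(\<forall>i. i \<notin> {1..n} \<longrightarrow> Binv_apply n E w i = 0) \<and>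
         (\<forall>(a,b)\<in>E. (if a = 0 then 0 else Binv_apply n E w a) - Binv_apply n E w b = w (a,b))"
proof -
  let ?Pr = "\<lambda>u. (\<forall>i. i \<notin> {1..n} \<longrightarrow> u i = 0) \<and> (\<forall>e\<in>E. (\<Sum>i=1..n. incB e i * u i) = w e)"
  obtain u0 where u0: "\<forall>(a,b)\<in>E. u0 a - u0 b = w (a,b)"
    using forest_potential[OF T tree_props(1)[OF T] subset_refl] by blast
  define u where "u = (\<lambda>i. if i \<in> {1..n} then u0 i - u0 0 else 0)"
  have uz: "\<forall>i. i \<notin> {1..n} \<longrightarrow> u i = 0" by (simp add: u_def)
  have u_eq: "u i = u0 i - u0 0" if "i \<le> n" for i using that by (cases "i = 0") (auto simp: u_def)
  have ex: "?Pr u"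
  proof (intro conjI uz ballI)
    fix e assume eE: "e \<in> E"
    obtain a b where e: "e = (a,b)" by force
    have "a \<noteq> b" "a \<le> n" "b \<le> n" using tree_props(2)[OF T] eE e Esub by auto
    then show "(\<Sum>i=1..n. incB e i * u i) = w e"
      using edge_sum[OF _ _ _ uz] u_eq u0 eE e by auto
  qed
  have uniq: "v = u" if "?Pr v" for v
  proof
    fix i
    define d where "d = (\<lambda>i. v i - u i)"
    have dz: "\<forall>i. i \<notin> {1..n} \<longrightarrow> d i = 0" using that uz by (simp add: d_def)
    have dE: "\<forall>(a,b)\<in>E. d a = 0 \<longleftrightarrow> d b = 0"
    proof (clarify)
      fix a b assume eE: "(a,b) \<in> E"
      have "a \<noteq> b" "a \<le> n" "b \<le> n" using tree_props(2)[OF T] eE Esub by auto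
      then have "v a - v b = w (a,b)" "u a - u b = w (a,b)"
        using edge_sum[OF _ _ _ uz] edge_sum[of a b n v] that ex eE by auto
      then show "d a = 0 \<longleftrightarrow> d b = 0" by (auto simp: d_def)
    qed
    show "v i = u i"
    proof (cases "i \<le> n")
      case True
      have "d 0 = 0" using dz by simp
      then have "d i = 0" using propagate[OF tree_props(4)[OF T _ True, of 0] dE] by simp
      then show ?thesis by (simp add: d_def)
    next
      case False then show ?thesis using dz by (simp add: d_def)
    qed
  qed
  have B: "Binv_apply n E w = u"
    unfolding Binv_apply_def using ex uniq by (rule the_equality)
  moreover have X: "\<forall>(a,b)\<in>E. (if a = 0 then 0 else u a) - u b = w (a,b)"
  proof (clarify)
    fix a b assume eE: "(a,b) \<in> E"
    have "a \<noteq> b" "a \<le> n" "b \<le> n" using tree_props(2)[OF T] eE Esub by auto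
    then show "(if a = 0 then 0 else u a) - u b = w (a,b)"
      using edge_sum[OF _ _ _ uz] ex eE by (auto simp: uz)
  qed
  show ?thesis unfolding B using uz X by blast
qed



lemma cnj_polar: "cnj S = of_real (cmod S) * cis (- Arg S)"
  using rcis_cnj[of S] by (simp add: rcis_def)

lemma edge_fwd:
  fixes vi vj l :: real and S z :: complex
  assumes vi: "vi > 0" and vj: "vj > 0" and l: "l = ((Re S)\<^sup>2 + (Im S)\<^sup>2) / vi"
    and d: "vj = vi - 2 * (Re z * Re S + Im z * Im S) + ((Re z)\<^sup>2 + (Im z)\<^sup>2) * l"
  shows "of_real (sqrt vi) * cis t - z * (of_real (sqrt l) * cis (t - Arg S))
          = of_real (sqrt vj) * cis (t - Arg (of_real vi - cnj z * S))"
    and "of_real (sqrt vi) * cis t * cnj (of_real (sqrt l) * cis (t - Arg S)) = S"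
proof -
  define A where "A = of_real vi - cnj z * S"
  define sv where "sv = sqrt vi"
  have sv: "sv > 0" "sv * sv = vi" using vi by (auto simp: sv_def)
  have "(cmod A)\<^sup>2 = vi * vj"
  proof -
    have "(cmod A)\<^sup>2 = (vi - (Re z * Re S + Im z * Im S))\<^sup>2 + (Re z * Im S - Im z * Re S)\<^sup>2"
      unfolding cmod_power2 by (simp add: A_def power2_eq_square algebra_simps)
    also have "\<dots> = vi * vj"
      using vi unfolding d l by (simp add: field_simps power2_eq_square)
    finally show ?thesis .
  qed
  then have mA: "cmod A = sv * sqrt vj"
    by (metis norm_ge_zero real_sqrt_mult real_sqrt_unique sv_def)
  have sl: "sqrt l = cmod S / sv"
    unfolding l sv_def by (simp add: cmod_power2[symmetric] real_sqrt_divide)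
  have I: "of_real (sqrt l) * cis (t - Arg S) = cis t * cnj S / of_real sv"
  proof -
    have "cis (t - Arg S) = cis t * cis (- Arg S)" by (simp add: cis_mult)
    then show ?thesis using sv unfolding sl cnj_polar[of S] by (simp add: field_simps)
  qed
  have cA: "cnj A = of_real vi - z * cnj S" by (simp add: A_def)
  have "of_real (sqrt vi) * cis t - z * (of_real (sqrt l) * cis (t - Arg S))
        = cis t * (of_real vi - z * cnj S) / of_real sv"
    unfolding I using sv by (simp add: field_simps sv_def[symmetric] flip: of_real_mult)
  also have "\<dots> = cis t * cnj A / of_real sv" by (simp add: cA)
  also have "\<dots> = of_real (sqrt vj) * (cis t * cis (- Arg A))"
    using sv unfolding cnj_polar[of A] mA by (simp add: field_simps)
  also have "\<dots> = of_real (sqrt vj) * cis (t - Arg A)" by (simp add: cis_mult)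
  finally show "of_real (sqrt vi) * cis t - z * (of_real (sqrt l) * cis (t - Arg S))
          = of_real (sqrt vj) * cis (t - Arg (of_real vi - cnj z * S))" by (simp add: A_def)
  have "cis t * cnj (cis t) = 1" by (simp add: cis_cnj cis_mult)
  then show "of_real (sqrt vi) * cis t * cnj (of_real (sqrt l) * cis (t - Arg S)) = S"
    unfolding I using sv by (simp add: field_simps sv_def[symmetric])
qed



definition thf :: "(nat \<Rightarrow> real) \<Rightarrow> nat \<Rightarrow> real" where
  "thf \<theta> i = (if i = 0 then 0 else \<theta> i)"

lemma wrap_range: "- pi < wrap x \<and> wrap x \<le> pi"
  using ceiling_correct [of "(x - pi) / (2*pi)"]
  by (simp add: wrap_def less_divide_eq divide_le_eq algebra_simps del: le_of_int_ceiling)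

lemma cis_wrap: "cis (wrap x) = cis x"
proof -
  have "cis (wrap x) = cis x / cis (2 * pi * of_int \<lceil>(x - pi) / (2 * pi)\<rceil>)"
    by (simp add: wrap_def cis_divide[symmetric])
  also have "\<dots> = cis x" by (subst cis_multiple_2pi) auto
  finally show ?thesis .
qed

lemma cis_inj_range:
  assumes "cis a = cis b" "-pi < a" "a \<le> pi" "-pi < b" "b \<le> pi"
  shows "a = b"
proof -
  have "Arg (cis a) = a" using assms(2,3) by (intro cis_Arg_unique) (auto simp: sgn_div_norm)
  moreover have "Arg (cis b) = b" using assms(4,5) by (intro cis_Arg_unique) (auto simp: sgn_div_norm)
  ultimately show ?thesis using assms(1) by metis
qed

lemma drop_eq:
  fixes Vi I z S :: complex
  assumes "S = Vi * cnj I"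
  shows "(cmod (Vi - z*I))\<^sup>2 = (cmod Vi)\<^sup>2 - 2*(Re z * Re S + Im z * Im S) + ((Re z)\<^sup>2 + (Im z)\<^sup>2) * (cmod I)\<^sup>2"
  unfolding cmod_power2 assms by (simp add: algebra_simps power2_eq_square)

lemma l_eq:
  fixes Vi I S :: complex
  assumes "S = Vi * cnj I" "Vi \<noteq> 0"
  shows "(cmod I)\<^sup>2 = ((Re S)\<^sup>2 + (Im S)\<^sup>2) / (cmod Vi)\<^sup>2"
proof -
  have "(Re S)\<^sup>2 + (Im S)\<^sup>2 = (cmod Vi)\<^sup>2 * (cmod I)\<^sup>2"
    unfolding cmod_power2[symmetric] assms(1) by (simp add: norm_mult power_mult_distrib)
  then show ?thesis using assms(2) by simp
qed

lemma fullv_cmod: "fullv V0 (\<lambda>i. (cmod (V i))\<^sup>2) a = (cmod (fullV V0 V a))\<^sup>2"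
  by (simp add: fullv_def fullV_def)

lemma hhat_X:
  assumes Esub: "E \<subseteq> {0..n} \<times> {0..n}" and V0: "V0 > 0" and x: "x \<in> Xset n E z y V0 s"
  shows "hhat x \<in> Yhat n E z y V0 s"
proof -
  obtain S I V s0 where xe: "x = (S, I, V, s0)" by (cases x) auto
  note X = x[unfolded xe Xset_def, simplified]
  have ext: "\<forall>e. e \<notin> E \<longrightarrow> S e = 0 \<and> I e = 0" "\<forall>i. i \<notin> {1..n} \<longrightarrow> V i = 0"
    "\<forall>i\<in>{1..n}. V i \<noteq> 0" using x unfolding xe Xset_def by auto
  have edge: "\<forall>(i, j)\<in>E. fullV V0 V i - fullV V0 V j = z (i, j) * I (i, j) \<and>
                 S (i, j) = fullV V0 V i * cnj (I (i, j))" using x unfolding xe Xset_def by auto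
  have bal: "\<forall>j\<in>{0..n}.
        (\<Sum>k\<in>{k. (j, k) \<in> E}. S (j, k))
        - (\<Sum>i\<in>{i. (i, j) \<in> E}. S (i, j) - z (i, j) * complex_of_real ((cmod (I (i, j)))\<^sup>2))
        + cnj (y j) * complex_of_real ((cmod (fullV V0 V j))\<^sup>2)
        = (if j = 0 then s0 else s j)" using x unfolding xe Xset_def by auto
  have nz: "fullV V0 V a \<noteq> 0" if "a \<le> n" for a
    using that ext(3) V0 by (auto simp: fullV_def)
  let ?v = "\<lambda>i. (cmod (V i))\<^sup>2"
  have hx: "hhat x = (\<lambda>e. Re (S e), \<lambda>e. Im (S e), \<lambda>e. (cmod (I e))\<^sup>2, ?v, Re s0, Im s0)"
    by (simp add: hhat_def xe)
  show ?thesis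
    unfolding hx Yhat_def
  proof (simp only: mem_Collect_eq prod.case, intro conjI)
    show "\<forall>e. e \<notin> E \<longrightarrow> Re (S e) = 0 \<and> Im (S e) = 0 \<and> (cmod (I e))\<^sup>2 = 0" using ext by simp
    show "\<forall>i. i \<notin> {1..n} \<longrightarrow> ?v i = 0" using ext by simp
    show "\<forall>i\<in>{1..n}. ?v i > 0" using ext by simp
    show "\<forall>j\<in>{0..n}.
        (if j = 0 then Re s0 else Re (s j)) =
          (\<Sum>k\<in>{k. (j, k) \<in> E}. Re (S (j, k)))
          - (\<Sum>i\<in>{i. (i, j) \<in> E}. Re (S (i, j)) - Re (z (i, j)) * (cmod (I (i, j)))\<^sup>2)
          + Re (y j) * fullv V0 ?v j \<and>
        (if j = 0 then Im s0 else Im (s j)) =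
          (\<Sum>k\<in>{k. (j, k) \<in> E}. Im (S (j, k)))
          - (\<Sum>i\<in>{i. (i, j) \<in> E}. Im (S (i, j)) - Im (z (i, j)) * (cmod (I (i, j)))\<^sup>2)
          + (- Im (y j)) * fullv V0 ?v j"
    proof
      fix j assume j: "j \<in> {0..n}"
      have e: "(\<Sum>k\<in>{k. (j, k) \<in> E}. S (j, k))
        - (\<Sum>i\<in>{i. (i, j) \<in> E}. S (i, j) - z (i, j) * complex_of_real ((cmod (I (i, j)))\<^sup>2))
        + cnj (y j) * complex_of_real (fullv V0 ?v j)
        = (if j = 0 then s0 else s j)" using bal j unfolding fullv_cmod by auto
      have r: "Re (if j = 0 then s0 else s j) = (if j = 0 then Re s0 else Re (s j))"
        "Im (if j = 0 then s0 else s j) = (if j = 0 then Im s0 else Im (s j))" by auto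
      show "(if j = 0 then Re s0 else Re (s j)) =
          (\<Sum>k\<in>{k. (j, k) \<in> E}. Re (S (j, k)))
          - (\<Sum>i\<in>{i. (i, j) \<in> E}. Re (S (i, j)) - Re (z (i, j)) * (cmod (I (i, j)))\<^sup>2)
          + Re (y j) * fullv V0 ?v j \<and>
        (if j = 0 then Im s0 else Im (s j)) =
          (\<Sum>k\<in>{k. (j, k) \<in> E}. Im (S (j, k)))
          - (\<Sum>i\<in>{i. (i, j) \<in> E}. Im (S (i, j)) - Im (z (i, j)) * (cmod (I (i, j)))\<^sup>2)
          + (- Im (y j)) * fullv V0 ?v j"
        using arg_cong[OF e, of Re] arg_cong[OF e, of Im] unfolding r
        by (simp del: Re_sum Im_sum add: Re_sum Im_sum)
    qed
    show "\<forall>(i, j)\<in>E.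
        fullv V0 ?v j = fullv V0 ?v i - 2 * (Re (z (i, j)) * Re (S (i, j)) + Im (z (i, j)) * Im (S (i, j)))
                       + ((Re (z (i, j)))\<^sup>2 + (Im (z (i, j)))\<^sup>2) * (cmod (I (i, j)))\<^sup>2 \<and>
        (cmod (I (i, j)))\<^sup>2 = ((Re (S (i, j)))\<^sup>2 + (Im (S (i, j)))\<^sup>2) / fullv V0 ?v i"
    proof (clarify)
      fix a b assume ab: "(a,b) \<in> E"
      then have an: "a \<le> n" using Esub by auto
      have Vb: "fullV V0 V b = fullV V0 V a - z (a,b) * I (a,b)" and Sab: "S (a,b) = fullV V0 V a * cnj (I (a,b))"
        using edge ab by (auto simp: algebra_simps)
      show "fullv V0 ?v b = fullv V0 ?v a - 2 * (Re (z (a, b)) * Re (S (a, b)) + Im (z (a, b)) * Im (S (a, b)))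
                       + ((Re (z (a, b)))\<^sup>2 + (Im (z (a, b)))\<^sup>2) * (cmod (I (a, b)))\<^sup>2 \<and>
        (cmod (I (a, b)))\<^sup>2 = ((Re (S (a, b)))\<^sup>2 + (Im (S (a, b)))\<^sup>2) / fullv V0 ?v a"
        unfolding fullv_cmod Vb using drop_eq[OF Sab] l_eq[OF Sab nz[OF an]] by simp
    qed
  qed
qed


lemma hX:
  assumes Esub: "E \<subseteq> {0..n} \<times> {0..n}" and V0: "V0 > 0"
    and Y: "(P,Q,l,v,p0,q0) \<in> Yhat n E z y V0 s"
  shows "h_theta \<theta> (P,Q,l,v,p0,q0) \<in> Xset n E z y V0 s \<longleftrightarrow>
           (\<forall>(a,b)\<in>E. cis (thf \<theta> b) = cis (thf \<theta> a - beta z V0 (P,Q,l,v,p0,q0) (a,b)))"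
    and "hhat (h_theta \<theta> (P,Q,l,v,p0,q0)) = (P,Q,l,v,p0,q0)"
proof -
  have Yext: "\<forall>e. e \<notin> E \<longrightarrow> P e = 0 \<and> Q e = 0 \<and> l e = 0"
    and Yv0: "\<forall>i. i \<notin> {1..n} \<longrightarrow> v i = 0" and Yvp: "\<forall>i\<in>{1..n}. v i > 0"
    and Ybal: "\<forall>j\<in>{0..n}.
        (if j = 0 then p0 else Re (s j)) =
          (\<Sum>k\<in>{k. (j, k) \<in> E}. P (j, k))
          - (\<Sum>i\<in>{i. (i, j) \<in> E}. P (i, j) - Re (z (i, j)) * l (i, j))
          + Re (y j) * fullv V0 v j \<and>
        (if j = 0 then q0 else Im (s j)) =
          (\<Sum>k\<in>{k. (j, k) \<in> E}. Q (j, k))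
          - (\<Sum>i\<in>{i. (i, j) \<in> E}. Q (i, j) - Im (z (i, j)) * l (i, j))
          + (- Im (y j)) * fullv V0 v j"
    and Yedge: "\<forall>(i, j)\<in>E.
        fullv V0 v j = fullv V0 v i - 2 * (Re (z (i, j)) * P (i, j) + Im (z (i, j)) * Q (i, j))
                       + ((Re (z (i, j)))\<^sup>2 + (Im (z (i, j)))\<^sup>2) * l (i, j) \<and>
        l (i, j) = ((P (i, j))\<^sup>2 + (Q (i, j))\<^sup>2) / fullv V0 v i"
    using Y unfolding Yhat_def by auto
  define S where "S = (\<lambda>e. Complex (P e) (Q e))"
  define I where "I = (\<lambda>e. complex_of_real (sqrt (l e)) * cis (thf \<theta> (fst e) - Arg (S e)))"
  define V where "V = (\<lambda>i. complex_of_real (sqrt (v i)) * cis (thf \<theta> i))"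
  have h: "h_theta \<theta> (P,Q,l,v,p0,q0) = (S, I, V, Complex p0 q0)"
    by (simp add: h_theta_def Let_def thf_def S_def I_def V_def)
  have fvpos: "fullv V0 v a > 0" if "a \<le> n" for a
    using that V0 Yvp by (auto simp: fullv_def)
  have vnn: "v i \<ge> 0" for i using Yv0 Yvp by (cases "i \<in> {1..n}") (auto intro: less_imp_le)
  have lnn: "l e \<ge> 0" for e
  proof (cases "e \<in> E")
    case True
    then obtain a b where e: "e = (a,b)" "(a,b) \<in> E" by (cases e) auto
    then have "a \<le> n" using Esub by auto
    have "l (a,b) = ((P (a,b))\<^sup>2 + (Q (a,b))\<^sup>2) / fullv V0 v a" using Yedge e(2) by blast
    then show ?thesis using fvpos[OF \<open>a \<le> n\<close>] e(1) by simp
  next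
    case False
    from Yext False have "l e = 0" by blast
    then show ?thesis by simp
  qed
  have FV: "fullV V0 V a = complex_of_real (sqrt (fullv V0 v a)) * cis (thf \<theta> a)" for a
    using V0 by (simp add: fullV_def fullv_def V_def thf_def)
  have cI: "(cmod (I e))\<^sup>2 = l e" for e
    using lnn[of e] by (simp add: I_def norm_mult)
  have cV: "(cmod (fullV V0 V j))\<^sup>2 = fullv V0 v j" if "j \<le> n" for j
    using fvpos[OF that] unfolding FV by (simp add: norm_mult)
  have edgeF: "fullV V0 V a - z (a,b) * I (a,b) = complex_of_real (sqrt (fullv V0 v b)) *
                   cis (thf \<theta> a - beta z V0 (P,Q,l,v,p0,q0) (a,b))
             \<and> S (a,b) = fullV V0 V a * cnj (I (a,b))" if ab: "(a,b) \<in> E" for a b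
  proof -
    have n: "a \<le> n" "b \<le> n" using ab Esub by auto
    have ReS: "Re (S (a,b)) = P (a,b)" "Im (S (a,b)) = Q (a,b)" by (simp_all add: S_def)
    have l: "l (a,b) = ((Re (S (a,b)))\<^sup>2 + (Im (S (a,b)))\<^sup>2) / fullv V0 v a"
      using Yedge ab ReS by auto
    have d: "fullv V0 v b = fullv V0 v a - 2 * (Re (z (a,b)) * Re (S (a,b)) + Im (z (a,b)) * Im (S (a,b)))
                 + ((Re (z (a,b)))\<^sup>2 + (Im (z (a,b)))\<^sup>2) * l (a,b)"
      using Yedge ab ReS by auto
    note ef = edge_fwd[OF fvpos[OF n(1)] fvpos[OF n(2)] l d, of "thf \<theta> a"]
    have bt: "beta z V0 (P,Q,l,v,p0,q0) (a,b) = Arg (complex_of_real (fullv V0 v a) - cnj (z (a,b)) * S (a,b))"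
      by (simp add: beta_def S_def)
    show ?thesis using ef unfolding FV bt by (simp add: I_def)
  qed
  have eqiff: "(fullV V0 V a - fullV V0 V b = z (a,b) * I (a,b)) \<longleftrightarrow>
      cis (thf \<theta> b) = cis (thf \<theta> a - beta z V0 (P,Q,l,v,p0,q0) (a,b))" if ab: "(a,b) \<in> E" for a b
  proof -
    have n: "b \<le> n" using ab Esub by auto
    have "(fullV V0 V a - fullV V0 V b = z (a,b) * I (a,b)) \<longleftrightarrow>
          fullV V0 V b = fullV V0 V a - z (a,b) * I (a,b)" by (auto simp: algebra_simps)
    also have "\<dots> \<longleftrightarrow> complex_of_real (sqrt (fullv V0 v b)) * cis (thf \<theta> b) =
         complex_of_real (sqrt (fullv V0 v b)) * cis (thf \<theta> a - beta z V0 (P,Q,l,v,p0,q0) (a,b))"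
      using edgeF[OF ab] FV[of b] by simp
    also have "\<dots> \<longleftrightarrow> cis (thf \<theta> b) = cis (thf \<theta> a - beta z V0 (P,Q,l,v,p0,q0) (a,b))"
      using fvpos[OF n] by simp
    finally show ?thesis .
  qed
  have bal: "(\<Sum>k\<in>{k. (j, k) \<in> E}. S (j, k))
        - (\<Sum>i\<in>{i. (i, j) \<in> E}. S (i, j) - z (i, j) * complex_of_real ((cmod (I (i, j)))\<^sup>2))
        + cnj (y j) * complex_of_real ((cmod (fullV V0 V j))\<^sup>2)
        = (if j = 0 then Complex p0 q0 else s j)" if j: "j \<in> {0..n}" for j
  proof -
    have jn: "j \<le> n" using j by simp
    have b: "(if j = 0 then p0 else Re (s j)) =
          (\<Sum>k\<in>{k. (j, k) \<in> E}. P (j, k))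
          - (\<Sum>i\<in>{i. (i, j) \<in> E}. P (i, j) - Re (z (i, j)) * l (i, j))
          + Re (y j) * fullv V0 v j"
        "(if j = 0 then q0 else Im (s j)) =
          (\<Sum>k\<in>{k. (j, k) \<in> E}. Q (j, k))
          - (\<Sum>i\<in>{i. (i, j) \<in> E}. Q (i, j) - Im (z (i, j)) * l (i, j))
          + (- Im (y j)) * fullv V0 v j" using Ybal j by auto
    show ?thesis unfolding cI cV[OF jn]
      using b by (cases "j = 0") (simp_all add: complex_eq_iff S_def)
  qed
  have ext1: "\<forall>e. e \<notin> E \<longrightarrow> S e = 0 \<and> I e = 0"
  proof (intro allI impI)
    fix e assume "e \<notin> E"
    then have "P e = 0" "Q e = 0" "l e = 0" using Yext by blast+
    then show "S e = 0 \<and> I e = 0" by (simp add: S_def I_def complex_eq_iff)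
  qed
  have ext2: "\<forall>i. i \<notin> {1..n} \<longrightarrow> V i = 0" using Yv0 by (simp add: V_def)
  have ext3: "\<forall>i\<in>{1..n}. V i \<noteq> 0" proof
    fix i assume "i \<in> {1..n}"
    then have "v i > 0" using Yvp by blast
    then show "V i \<noteq> 0" by (simp add: V_def)
  qed
  have bal': "\<forall>j\<in>{0..n}. (\<Sum>k\<in>{k. (j, k) \<in> E}. S (j, k))
        - (\<Sum>i\<in>{i. (i, j) \<in> E}. S (i, j) - z (i, j) * complex_of_real ((cmod (I (i, j)))\<^sup>2))
        + cnj (y j) * complex_of_real ((cmod (fullV V0 V j))\<^sup>2)
        = (if j = 0 then Complex p0 q0 else s j)" by (rule ballI) (rule bal)
  show "h_theta \<theta> (P,Q,l,v,p0,q0) \<in> Xset n E z y V0 s \<longleftrightarrow>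
           (\<forall>(a,b)\<in>E. cis (thf \<theta> b) = cis (thf \<theta> a - beta z V0 (P,Q,l,v,p0,q0) (a,b)))"
  proof
    assume "h_theta \<theta> (P,Q,l,v,p0,q0) \<in> Xset n E z y V0 s"
    then have m: "(\<forall>e. e \<notin> E \<longrightarrow> S e = 0 \<and> I e = 0) \<and>
     (\<forall>i. i \<notin> {1..n} \<longrightarrow> V i = 0) \<and>
     (\<forall>i\<in>{1..n}. V i \<noteq> 0) \<and>
     (\<forall>(i, j)\<in>E. fullV V0 V i - fullV V0 V j = z (i, j) * I (i, j) \<and>
                 S (i, j) = fullV V0 V i * cnj (I (i, j))) \<and>
     (\<forall>j\<in>{0..n}.
        (\<Sum>k\<in>{k. (j, k) \<in> E}. S (j, k))
        - (\<Sum>i\<in>{i. (i, j) \<in> E}. S (i, j) - z (i, j) * complex_of_real ((cmod (I (i, j)))\<^sup>2))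
        + cnj (y j) * complex_of_real ((cmod (fullV V0 V j))\<^sup>2)
        = (if j = 0 then Complex p0 q0 else s j))"
      by (simp only: h Xset_def mem_Collect_eq prod.case)
    note A4 = m[THEN conjunct2, THEN conjunct2, THEN conjunct2, THEN conjunct1]
    show "\<forall>(a,b)\<in>E. cis (thf \<theta> b) = cis (thf \<theta> a - beta z V0 (P,Q,l,v,p0,q0) (a,b))"
    proof (clarify)
      fix a b assume ab: "(a,b) \<in> E"
      have "fullV V0 V a - fullV V0 V b = z (a,b) * I (a,b)" using bspec[OF A4 ab] by simp
      then show "cis (thf \<theta> b) = cis (thf \<theta> a - beta z V0 (P,Q,l,v,p0,q0) (a,b))"
        using eqiff[OF ab] by blast
    qed
  next
    assume c: "\<forall>(a,b)\<in>E. cis (thf \<theta> b) = cis (thf \<theta> a - beta z V0 (P,Q,l,v,p0,q0) (a,b))"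
    have e: "\<forall>(a,b)\<in>E. fullV V0 V a - fullV V0 V b = z (a,b) * I (a,b) \<and>
                 S (a,b) = fullV V0 V a * cnj (I (a,b))"
    proof (clarify)
      fix a b assume ab: "(a,b) \<in> E"
      have "cis (thf \<theta> b) = cis (thf \<theta> a - beta z V0 (P,Q,l,v,p0,q0) (a,b))"
        using bspec[OF c ab] by simp
      then show "fullV V0 V a - fullV V0 V b = z (a,b) * I (a,b) \<and>
                 S (a,b) = fullV V0 V a * cnj (I (a,b))"
        using eqiff[OF ab] edgeF[OF ab] by blast
    qed
    show "h_theta \<theta> (P,Q,l,v,p0,q0) \<in> Xset n E z y V0 s"
      unfolding h Xset_def mem_Collect_eq prod.case
      by (intro conjI ext1 ext2 ext3 e bal')
  qed
  have "hhat (S, I, V, Complex p0 q0) = (P,Q,l,v,p0,q0)"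
    using cI vnn by (simp add: hhat_def S_def V_def norm_mult)
  then show "hhat (h_theta \<theta> (P,Q,l,v,p0,q0)) = (P,Q,l,v,p0,q0)" by (simp add: h)
qed




theorem theorem3:
  fixes n :: nat and E :: "(nat \<times> nat) set"
    and z :: "nat \<times> nat \<Rightarrow> complex" and y :: "nat \<Rightarrow> complex"
    and V0 :: real and s :: "nat \<Rightarrow> complex"
  assumes "E \<subseteq> {0..n} \<times> {0..n}"
    and "underlying_tree n E"
    and "V0 > 0"
  shows "hhat ` Xset n E z y V0 s = Yhat n E z y V0 s \<and>
         (\<forall>yh\<in>Yhat n E z y V0 s.
            theta_star n E z V0 yh \<in> Theta n \<and>
            h_theta (theta_star n E z V0 yh) yh \<in> Xset n E z y V0 s \<and>
            (\<forall>\<theta>\<in>Theta n. h_theta \<theta> yh \<in> Xset n E z y V0 s \<longrightarrow> \<theta> = theta_star n E z V0 yh))"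
proof -
  note Esub = assms(1) and T = assms(2) and V0 = assms(3)
  have part2: "theta_star n E z V0 yh \<in> Theta n \<and>
            h_theta (theta_star n E z V0 yh) yh \<in> Xset n E z y V0 s \<and>
            (\<forall>\<theta>\<in>Theta n. h_theta \<theta> yh \<in> Xset n E z y V0 s \<longrightarrow> \<theta> = theta_star n E z V0 yh)"
    if Y: "yh \<in> Yhat n E z y V0 s" for yh
  proof -
    obtain P Q l v p0 q0 where yh: "yh = (P,Q,l,v,p0,q0)" by (cases yh) auto
    define \<beta> where "\<beta> = beta z V0 yh"
    define u where "u = Binv_apply n E \<beta>"
    have uz: "\<forall>i. i \<notin> {1..n} \<longrightarrow> u i = 0"
      and ue0: "\<forall>(a,b)\<in>E. (if a = 0 then 0 else u a) - u b = \<beta> (a,b)"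
      using Binv_spec[OF T Esub, of \<beta>] unfolding u_def by auto
    have u0: "u 0 = 0" using uz by simp
    have ue: "u a - u b = \<beta> (a,b)" if "(a,b) \<in> E" for a b
      using ue0 that u0 by (cases "a = 0") auto
    define ts where "ts = theta_star n E z V0 yh"
    have ts: "ts = (\<lambda>i. if i \<in> {1..n} then wrap (u i) else 0)"
      unfolding ts_def theta_star_def u_def \<beta>_def by simp
    have cisu: "cis (thf ts i) = cis (u i)" for i
      using uz by (cases "i \<in> {1..n}") (auto simp: ts thf_def cis_wrap)
    have inT: "ts \<in> Theta n" using wrap_range by (simp add: ts Theta_def)
    have cond: "\<forall>(a,b)\<in>E. cis (thf ts b) = cis (thf ts a - beta z V0 (P,Q,l,v,p0,q0) (a,b))"
    proof (clarify)
      fix a b assume ab: "(a,b) \<in> E"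
      have "cis (thf ts a - beta z V0 (P,Q,l,v,p0,q0) (a,b)) = cis (thf ts a) / cis (\<beta> (a,b))"
        by (simp add: cis_divide yh \<beta>_def)
      also have "\<dots> = cis (u a - \<beta> (a,b))" by (simp add: cisu cis_divide)
      also have "\<dots> = cis (thf ts b)"
      proof -
        have "u a - \<beta> (a,b) = u b" using ue[OF ab] by linarith
        then show ?thesis using cisu[of b] by simp
      qed
      finally show "cis (thf ts b) = cis (thf ts a - beta z V0 (P,Q,l,v,p0,q0) (a,b))" by simp
    qed
    have inX: "h_theta ts yh \<in> Xset n E z y V0 s"
      using hX(1)[OF Esub V0 Y[unfolded yh]] cond by (simp add: yh)
    have uniq: "\<theta> = ts" if th: "\<theta> \<in> Theta n" and hx: "h_theta \<theta> yh \<in> Xset n E z y V0 s" for \<theta>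
    proof -
      have c: "\<forall>(a,b)\<in>E. cis (thf \<theta> b) = cis (thf \<theta> a - \<beta> (a,b))"
        using hX(1)[OF Esub V0 Y[unfolded yh]] hx by (simp add: yh \<beta>_def)
      have pr: "\<forall>(a,b)\<in>E. cis (thf \<theta> a - u a) = 1 \<longleftrightarrow> cis (thf \<theta> b - u b) = 1"
      proof (clarify)
        fix a b assume ab: "(a,b) \<in> E"
        have "thf \<theta> a - \<beta> (a,b) = (thf \<theta> a - u a) + u b" using ue[OF ab] by simp
        moreover have "cis (thf \<theta> b) = cis (thf \<theta> a - \<beta> (a,b))" using bspec[OF c ab] by simp
        ultimately have "cis (thf \<theta> b) = cis ((thf \<theta> a - u a) + u b)" by (simp only:)
        then have "cis (thf \<theta> b) = cis (thf \<theta> a - u a) * cis (u b)"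
          by (simp only: cis_mult)
        moreover have "cis (thf \<theta> b - u b) = cis (thf \<theta> b) / cis (u b)" by (simp add: cis_divide)
        ultimately have "cis (thf \<theta> b - u b) = cis (thf \<theta> a - u a)" by simp
        then show "cis (thf \<theta> a - u a) = 1 \<longleftrightarrow> cis (thf \<theta> b - u b) = 1" by simp
      qed
      show "\<theta> = ts"
      proof
        fix i show "\<theta> i = ts i"
        proof (cases "i \<in> {1..n}")
          case True
          then have "i \<le> n" by simp
          have "cis (thf \<theta> 0 - u 0) = 1" by (simp add: thf_def u0)
          then have "cis (thf \<theta> i - u i) = 1"
            using propagate[OF tree_props(4)[OF T _ \<open>i \<le> n\<close>, of 0] pr] by simp
          moreover have "cis (thf \<theta> i) = cis (thf \<theta> i - u i) * cis (u i)" by (simp add: cis_mult)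
          ultimately have "cis (\<theta> i) = cis (wrap (u i))" using True by (simp add: thf_def cis_wrap)
          moreover have "-pi < \<theta> i" "\<theta> i \<le> pi" using th True by (auto simp: Theta_def)
          ultimately have "\<theta> i = wrap (u i)" using wrap_range cis_inj_range by blast
          then show ?thesis using True by (simp add: ts)
        next
          case False
          have "\<theta> i = 0" using th False unfolding Theta_def by blast
          moreover have "ts i = 0" unfolding ts by (rule if_not_P[OF False])
          ultimately show ?thesis by simp
        qed
      qed
    qed
    show ?thesis unfolding ts_def[symmetric] using inT inX uniq by blast
  qed
  have sub1: "hhat ` Xset n E z y V0 s \<subseteq> Yhat n E z y V0 s"
    using hhat_X[OF Esub V0] by blast
  have sub2: "yh \<in> hhat ` Xset n E z y V0 s" if Y: "yh \<in> Yhat n E z y V0 s" for yh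
  proof -
    obtain P Q l v p0 q0 where yh: "yh = (P,Q,l,v,p0,q0)" by (cases yh) auto
    have "hhat (h_theta (theta_star n E z V0 yh) yh) = yh"
      using hX(2)[OF Esub V0 Y[unfolded yh]] by (simp add: yh)
    moreover have "h_theta (theta_star n E z V0 yh) yh \<in> Xset n E z y V0 s"
      using part2[OF Y] by blast
    ultimately show ?thesis by (rule image_eqI[OF sym])
  qed
  have A: "hhat ` Xset n E z y V0 s = Yhat n E z y V0 s"
    by (intro equalityI sub1 subsetI sub2)
  have B: "\<forall>yh\<in>Yhat n E z y V0 s.
            theta_star n E z V0 yh \<in> Theta n \<and>
            h_theta (theta_star n E z V0 yh) yh \<in> Xset n E z y V0 s \<and>
            (\<forall>\<theta>\<in>Theta n. h_theta \<theta> yh \<in> Xset n E z y V0 s \<longrightarrow> \<theta> = theta_star n E z V0 yh)"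
  proof (rule ballI)
    fix yh assume "yh \<in> Yhat n E z y V0 s"
    then show "theta_star n E z V0 yh \<in> Theta n \<and>
            h_theta (theta_star n E z V0 yh) yh \<in> Xset n E z y V0 s \<and>
            (\<forall>\<theta>\<in>Theta n. h_theta \<theta> yh \<in> Xset n E z y V0 s \<longrightarrow> \<theta> = theta_star n E z V0 yh)"
      by (rule part2)
  qed
  show ?thesis using A B by (rule conjI)
qed


end
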